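(* Let $n,m\ge 2$ and $K$ be positive integers, $T=mn$, and consider the one-way fixed effects panel regression model \[ \mathbf{y}=\mathbf{X}\boldsymbol{\beta}+\mathbf{Z}\boldsymbol{\gamma}+\mathbf{u}, \] where $\mathbf{y}\in\mathbb{R}^T$ is the response vector, $\mathbf{X}$ is a known non-stochastic real $(T\times K)$ matrix, $\boldsymbol{\beta}\in\mathbb{R}^K$ and $\boldsymbol{\gamma}\in\mathbb{R}^n$ are unknown parameters, $\mathbf{Z}=\mathbf{I}_n\otimes\mathbf{e}_m$ with $\mathbf{e}_m$ the $(m\times1)$ vector of ones, $E(\mathbf{u})=\mathbf{0}$ and $E(\mathbf{u}\mathbf{u}')=\mathbf{I}_n\otimes\boldsymbol{\Sigma}$ with $\boldsymbol{\Sigma}$ a known symmetric positive definite $(m\times m)$ matrix. Define \[ \mathbf{Q}=\mathbf{Z}\big(\mathbf{Z}'(\mathbf{I}_n\otimes\boldsymbol{\Sigma}^{-1})\mathbf{Z}\big)^{-1}\mathbf{Z}'(\mathbf{I}_n\otimes\boldsymbol{\Sigma}^{-1}),\qquad \mathbf{P}=(\mathbf{I}_n\otimes\boldsymbol{\Sigma}^{-1})(\mathbf{I}_T-\mathbf{Q}), \] $\mathbf{M}_m=\mathbf{I}_m-\mathbf{e}_m\mathbf{e}_m'/m$, $\mathbf{M}=\mathbf{I}_n\otimes\mathbf{M}_m$, and let $(\mathbf{I}_n\otimes\mathbf{M}_m\boldsymbol{\Sigma}\mathbf{M}_m)^{+}$ denote the Moore–Penrose inverse of $\mathbf{I}_n\otimes\mathbf{M}_m\boldsymbol{\Sigma}\mathbf{M}_m$.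 Set $\mathbf{C}_+=\mathbf{X}'\mathbf{M}(\mathbf{I}_n\otimes\mathbf{M}_m\boldsymbol{\Sigma}\mathbf{M}_m)^{+}\mathbf{M}\mathbf{X}$, and assume that $\mathbf{X}'\mathbf{P}\mathbf{X}$ and $\mathbf{C}_+$ are nonsingular. Define \[ \hat{\boldsymbol{\beta}}_{GLS}=(\mathbf{X}'\mathbf{P}\mathbf{X})^{-1}\mathbf{X}'\mathbf{P}\mathbf{y},\qquad \hat{\boldsymbol{\beta}}_{MLS}=\mathbf{C}_+^{-1}\mathbf{X}'\mathbf{M}(\mathbf{I}_n\otimes\mathbf{M}_m\boldsymbol{\Sigma}\mathbf{M}_m)^{+}\mathbf{y}. \] Then $\hat{\boldsymbol{\beta}}_{MLS}=\hat{\boldsymbol{\beta}}_{GLS}$ (for every realization $\mathbf{y}\in\mathbb{R}^T$).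
   Context: $\otimes$ denotes the Kronecker product; $\mathbf{I}_k$ the $k\times k$ identity matrix. The Moore–Penrose inverse $\mathbf{B}^+$ of a matrix $\mathbf{B}$ is the unique matrix satisfying $\mathbf{B}\mathbf{B}^+\mathbf{B}=\mathbf{B}$, $\mathbf{B}^+\mathbf{B}\mathbf{B}^+=\mathbf{B}^+$, and $\mathbf{B}\mathbf{B}^+$, $\mathbf{B}^+\mathbf{B}$ symmetric. $\hat{\boldsymbol{\beta}}_{GLS}$ is the generalized least squares estimator of $\boldsymbol{\beta}$ in the fixed effects model, and $\hat{\boldsymbol{\beta}}_{MLS}$ is the Moore–Penrose inverse least squares estimator of $\boldsymbol{\beta}$ in the within-transformed model $\mathbf{M}\mathbf{y}=\mathbf{M}\mathbf{X}\boldsymbol{\beta}+\mathbf{M}\mathbf{u}$, whose error has singular dispersion $\mathbf{I}_n\otimes\mathbf{M}_m\boldsymbol{\Sigma}\mathbf{M}_m$. *)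

theory Defs
  imports "Jordan_Normal_Form.Matrix"
begin

definition kron :: "'a :: times mat \<Rightarrow> 'a mat \<Rightarrow> 'a mat" where
  "kron A B = mat (dim_row A * dim_row B) (dim_col A * dim_col B)
     (\<lambda>(i,j). A $$ (i div dim_row B, j div dim_col B) * B $$ (i mod dim_row B, j mod dim_col B))"

definition ones_col :: "nat \<Rightarrow> 'a :: {zero,one} mat" where
  "ones_col m = mat m 1 (\<lambda>_. 1)"

text \<open>Inverse of a square matrix (meaningful when the matrix is nonsingular).\<close>
definition mat_inv :: "'a :: semiring_1 mat \<Rightarrow> 'a mat" where
  "mat_inv A = (THE B. B \<in> carrier_mat (dim_row A) (dim_row A) \<and> inverts_mat A B \<and> inverts_mat B A)"

definition is_MP_inverse :: "real mat \<Rightarrow> real mat \<Rightarrow> bool" where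
  "is_MP_inverse A B \<longleftrightarrow> B \<in> carrier_mat (dim_col A) (dim_row A) \<and>
     A * B * A = A \<and> B * A * B = B \<and>
     transpose_mat (A * B) = A * B \<and> transpose_mat (B * A) = B * A"

definition MP_inverse :: "real mat \<Rightarrow> real mat" where
  "MP_inverse A = (THE B. is_MP_inverse A B)"

definition sym_pos_def :: "nat \<Rightarrow> real mat \<Rightarrow> bool" where
  "sym_pos_def m S \<longleftrightarrow> S \<in> carrier_mat m m \<and> transpose_mat S = S \<and>
     (\<forall>x \<in> carrier_vec m. x \<noteq> 0\<^sub>v m \<longrightarrow> x \<bullet> (S *\<^sub>v x) > 0)"

end

theory Submission
  imports Defs "Jordan_Normal_Form.Determinant"
begin


lemma kron_carrier: "(A::real mat) \<in> carrier_mat p q \<Longrightarrow> kron (1\<^sub>m n) A \<in> carrier_mat (n*p) (n*q)"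
  by (simp add: kron_def)

lemma kron_index: assumes "(A::real mat) \<in> carrier_mat p q" "i < n*p" "j < n*q"
  shows "kron (1\<^sub>m n) A $$ (i,j) = (if i div p = j div q then A $$ (i mod p, j mod q) else 0)"
proof -
  have "i div p < n" "j div q < n" using assms by (auto simp: less_mult_imp_div_less mult.commute)
  then show ?thesis using assms by (simp add: kron_def)
qed

lemma kron_mult: assumes A: "(A::real mat) \<in> carrier_mat p q" and B: "B \<in> carrier_mat q r" and q: "0 < q"
  shows "kron (1\<^sub>m n) A * kron (1\<^sub>m n) B = kron (1\<^sub>m n) (A * B)"
proof (rule eq_matI)
  have AB: "A * B \<in> carrier_mat p r" using A B by auto
  show "dim_row (kron (1\<^sub>m n) A * kron (1\<^sub>m n) B) = dim_row (kron (1\<^sub>m n) (A * B))"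
    using A B by (simp add: kron_def)
  show "dim_col (kron (1\<^sub>m n) A * kron (1\<^sub>m n) B) = dim_col (kron (1\<^sub>m n) (A * B))"
    using A B by (simp add: kron_def)
  fix i j assume "i < dim_row (kron (1\<^sub>m n) (A * B))" "j < dim_col (kron (1\<^sub>m n) (A * B))"
  then have i: "i < n*p" and j: "j < n*r" using kron_carrier[OF AB, of n] by auto
  define b where "b = i div p"
  have bn: "b < n" using i by (auto simp: b_def less_mult_imp_div_less mult.commute)
  have bq: "b*q + q \<le> n*q" using bn mult_le_mono1[of "b+1" n q] by simp
  define f where "f k = kron (1\<^sub>m n) A $$ (i,k) * kron (1\<^sub>m n) B $$ (k,j)" for k
  have "(kron (1\<^sub>m n) A * kron (1\<^sub>m n) B) $$ (i,j) = (\<Sum>k\<in>{0..<n*q}. f k)"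
    using kron_carrier[OF A, of n] kron_carrier[OF B, of n] i j
    by (simp add: scalar_prod_def f_def)
  also have "\<dots> = (\<Sum>k\<in>{b*q..<b*q+q}. f k)"
  proof (rule sum.mono_neutral_right)
    show "{b*q..<b*q+q} \<subseteq> {0..<n*q}" using bq by auto
    show "\<forall>k\<in>{0..<n*q} - {b*q..<b*q+q}. f k = 0"
    proof
      fix k assume k: "k \<in> {0..<n*q} - {b*q..<b*q+q}"
      have "k div q \<noteq> b"
      proof
        assume "k div q = b"
        then have "k = b*q + k mod q" by (metis div_mult_mod_eq)
        moreover have "k mod q < q" using q by simp
        ultimately have "b*q \<le> k" "k < b*q+q" by linarith+
        then show False using k by auto
      qed
      then show "f k = 0" using k i A by (simp add: f_def kron_index[OF A] b_def)
    qed
  qed simp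
  also have "\<dots> = (\<Sum>l\<in>{0..<q}. f (b*q + l))"
    by (rule sum.reindex_bij_witness[of _ "\<lambda>l. b*q+l" "\<lambda>k. k - b*q"]) auto
  also have "\<dots> = (\<Sum>l\<in>{0..<q}. A $$ (i mod p, l) * (if b = j div r then B $$ (l, j mod r) else 0))"
  proof (rule sum.cong[OF refl])
    fix l assume l: "l \<in> {0..<q}"
    have k: "b*q + l < n*q" using bq l by simp
    have d: "(b*q+l) div q = b" "(b*q+l) mod q = l" using l by auto
    show "f (b*q+l) = A $$ (i mod p, l) * (if b = j div r then B $$ (l, j mod r) else 0)"
      unfolding f_def kron_index[OF A i k] kron_index[OF B k j] d by (simp add: b_def)
  qed
  also have "\<dots> = kron (1\<^sub>m n) (A * B) $$ (i, j)"
  proof -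
    have "0 < p" "0 < r" using i j by (auto intro: gr0I)
    then have "i mod p < p" "j mod r < r" by auto
    then show ?thesis using A B unfolding kron_index[OF AB i j] b_def[symmetric]
      by (auto simp: scalar_prod_def intro!: sum.cong)
  qed
  finally show "(kron (1\<^sub>m n) A * kron (1\<^sub>m n) B) $$ (i,j) = kron (1\<^sub>m n) (A * B) $$ (i, j)" .
qed

lemma mod_lt[simp]: "i < n * p \<Longrightarrow> i mod (p::nat) < p"
  by (cases "p = 0") auto

lemma kron_transpose: assumes A: "(A::real mat) \<in> carrier_mat p q"
  shows "transpose_mat (kron (1\<^sub>m n) A) = kron (1\<^sub>m n) (transpose_mat A)"
proof -
  have At: "transpose_mat A \<in> carrier_mat q p" using A by simp
  show ?thesis
    by (rule eq_matI, insert kron_carrier[OF A, of n] kron_carrier[OF At, of n] carrier_matD[OF A],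
        auto simp: kron_index[OF A] kron_index[OF At])
qed

lemma kron_minus: assumes A: "(A::real mat) \<in> carrier_mat p q" and B: "B \<in> carrier_mat p q"
  shows "kron (1\<^sub>m n) A - kron (1\<^sub>m n) B = kron (1\<^sub>m n) (A - B)"
proof -
  have AB: "A - B \<in> carrier_mat p q" using A B by (auto intro: minus_carrier_mat)
  show ?thesis
    by (rule eq_matI, insert kron_carrier[OF A, of n] kron_carrier[OF B, of n] kron_carrier[OF AB, of n] A B,
        auto simp: kron_index[OF A] kron_index[OF B] kron_index[OF AB])
qed

lemma div_mod_inj: "(i::nat) div m = j div m \<Longrightarrow> i mod m = j mod m \<Longrightarrow> i = j"
  by (metis div_mult_mod_eq)

lemma kron_one: "kron (1\<^sub>m n) (1\<^sub>m m) = (1\<^sub>m (n*m) :: real mat)"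
proof -
  have A: "(1\<^sub>m m :: real mat) \<in> carrier_mat m m" by simp
  show ?thesis
    by (rule eq_matI, insert kron_carrier[OF A, of n],
        auto simp: kron_index[OF A] dest: div_mod_inj)
qed

lemma kron_scal: "kron (1\<^sub>m n) (c \<cdot>\<^sub>m 1\<^sub>m 1) = (c \<cdot>\<^sub>m 1\<^sub>m n :: real mat)"
proof -
  have A: "(c \<cdot>\<^sub>m 1\<^sub>m 1 :: real mat) \<in> carrier_mat 1 1" by simp
  show ?thesis
    by (rule eq_matI, auto simp: kron_def)
qed

lemma mat_inv_eq: assumes A: "(A::real mat) \<in> carrier_mat k k" and B: "B \<in> carrier_mat k k"
  and AB: "A * B = 1\<^sub>m k" and BA: "B * A = 1\<^sub>m k"
  shows "mat_inv A = B"
  unfolding mat_inv_def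
proof (rule the_equality)
  show "B \<in> carrier_mat (dim_row A) (dim_row A) \<and> inverts_mat A B \<and> inverts_mat B A"
    using A B AB BA by (auto simp: inverts_mat_def)
  fix C assume C: "C \<in> carrier_mat (dim_row A) (dim_row A) \<and> inverts_mat A C \<and> inverts_mat C A"
  then have C1: "C \<in> carrier_mat k k" and CA: "C * A = 1\<^sub>m k" using A by (auto simp: inverts_mat_def)
  have "C = C * (A * B)" using C1 AB by simp
  also have "\<dots> = (C * A) * B" using A B C1 by (simp add: assoc_mult_mat)
  also have "\<dots> = B" using CA B by simp
  finally show "C = B" .
qed

lemma MP_parts: assumes "is_MP_inverse A B"
  shows "B \<in> carrier_mat (dim_col A) (dim_row A)" "A*B*A = A" "B*A*B = B"
    "transpose_mat (A*B) = A*B" "transpose_mat (B*A) = B*A"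
proof -
  note h = assms[unfolded is_MP_inverse_def]
  show "B \<in> carrier_mat (dim_col A) (dim_row A)" using h by (elim conjE)
  show "A*B*A = A" using h by (elim conjE)
  show "B*A*B = B" using h by (elim conjE)
  show "transpose_mat (A*B) = A*B" using h by (elim conjE)
  show "transpose_mat (B*A) = B*A" using h by (elim conjE)
qed

lemma MP_uniq: assumes B1: "is_MP_inverse A B1" and B2: "is_MP_inverse A B2"
  shows "B1 = B2"
proof -
  have A: "A \<in> carrier_mat (dim_row A) (dim_col A)" unfolding carrier_mat_def by blast
  note b1 = MP_parts(1)[OF B1] and b2 = MP_parts(1)[OF B2]
  note a1 = MP_parts(2)[OF B1] and b1a = MP_parts(3)[OF B1] and s1 = MP_parts(4)[OF B1] and s1' = MP_parts(5)[OF B1]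
  note a2 = MP_parts(2)[OF B2] and b2a = MP_parts(3)[OF B2] and s2 = MP_parts(4)[OF B2] and s2' = MP_parts(5)[OF B2]
  have At: "transpose_mat A \<in> carrier_mat (dim_col A) (dim_row A)" using A by simp
  have t1: "transpose_mat B1 \<in> carrier_mat (dim_row A) (dim_col A)" using b1 by simp
  have t2: "transpose_mat B2 \<in> carrier_mat (dim_row A) (dim_col A)" using b2 by simp
  have S1: "transpose_mat B1 * transpose_mat A = A * B1"
    using s1 transpose_mult[OF A b1] by simp
  have S2': "transpose_mat A * transpose_mat B2 = B2 * A"
    using s2' transpose_mult[OF b2 A] by simp
  have AtA2: "transpose_mat A = transpose_mat A * (A * B2)"
  proof -
    have "transpose_mat A = transpose_mat (A * B2 * A)" by (simp only: a2)
    also have "\<dots> = transpose_mat A * transpose_mat (A * B2)"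
      by (rule transpose_mult[OF mult_carrier_mat[OF A b2] A])
    also have "\<dots> = transpose_mat A * (A * B2)" by (simp only: s2)
    finally show ?thesis .
  qed
  have AtA1: "transpose_mat A = (B1 * A) * transpose_mat A"
  proof -
    have "A = A * (B1 * A)" by (rule trans[OF assoc_mult_mat[OF A b1 A, symmetric] a1, symmetric])
    then have "transpose_mat A = transpose_mat (A * (B1 * A))" by (rule arg_cong)
    also have "\<dots> = transpose_mat (B1 * A) * transpose_mat A"
      by (rule transpose_mult[OF A mult_carrier_mat[OF b1 A]])
    also have "\<dots> = (B1 * A) * transpose_mat A" by (simp only: s1')
    finally show ?thesis .
  qed
  have "B1 = B1 * (A * B1)" by (rule trans[OF assoc_mult_mat[OF b1 A b1, symmetric] b1a, symmetric])
  also have "\<dots> = B1 * (transpose_mat B1 * transpose_mat A)" by (simp only: S1)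
  also have "\<dots> = B1 * (transpose_mat B1 * (transpose_mat A * (A * B2)))" by (simp only: AtA2[symmetric])
  also have "\<dots> = B1 * ((transpose_mat B1 * transpose_mat A) * (A * B2))"
    by (simp only: assoc_mult_mat[OF t1 At mult_carrier_mat[OF A b2]])
  also have "\<dots> = B1 * ((A * B1) * (A * B2))" by (simp only: S1)
  also have "\<dots> = (B1 * (A * B1)) * (A * B2)"
    by (rule assoc_mult_mat[OF b1 mult_carrier_mat[OF A b1] mult_carrier_mat[OF A b2], symmetric])
  also have "\<dots> = B1 * (A * B2)" by (simp only: trans[OF assoc_mult_mat[OF b1 A b1, symmetric] b1a])
  finally have e1: "B1 = B1 * (A * B2)" .
  have "B2 = (B2 * A) * B2" by (rule b2a[symmetric])
  also have "\<dots> = (transpose_mat A * transpose_mat B2) * B2" by (simp only: S2')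
  also have "\<dots> = (((B1 * A) * transpose_mat A) * transpose_mat B2) * B2" by (simp only: AtA1[symmetric])
  also have "\<dots> = ((B1 * A) * (transpose_mat A * transpose_mat B2)) * B2"
    by (simp only: assoc_mult_mat[OF mult_carrier_mat[OF b1 A] At t2])
  also have "\<dots> = ((B1 * A) * (B2 * A)) * B2" by (simp only: S2')
  also have "\<dots> = (B1 * A) * ((B2 * A) * B2)"
    by (rule assoc_mult_mat[OF mult_carrier_mat[OF b1 A] mult_carrier_mat[OF b2 A] b2])
  also have "\<dots> = (B1 * A) * B2" by (simp only: b2a)
  also have "\<dots> = B1 * (A * B2)" by (rule assoc_mult_mat[OF b1 A b2])
  finally show ?thesis using e1 by simp
qed

lemma MP_eq: "is_MP_inverse A B \<Longrightarrow> MP_inverse A = B"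
  unfolding MP_inverse_def using MP_uniq by blast

lemma kron_MP: assumes A: "A \<in> carrier_mat p q" and p: "0 < p" and q: "0 < q"
  and MP: "is_MP_inverse A B"
  shows "is_MP_inverse (kron (1\<^sub>m n) A) (kron (1\<^sub>m n) B)"
proof -
  have B: "B \<in> carrier_mat q p" using MP_parts(1)[OF MP] A by auto
  have AB: "A * B \<in> carrier_mat p p" and BA: "B * A \<in> carrier_mat q q" using A B by auto
  have c: "kron (1\<^sub>m n) B \<in> carrier_mat (dim_col (kron (1\<^sub>m n) A)) (dim_row (kron (1\<^sub>m n) A))"
    using kron_carrier[OF A, of n] kron_carrier[OF B, of n] by auto
  have 1: "kron (1\<^sub>m n) A * kron (1\<^sub>m n) B * kron (1\<^sub>m n) A = kron (1\<^sub>m n) A"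
    by (simp only: kron_mult[OF A B q] kron_mult[OF AB A p] MP_parts(2)[OF MP])
  have 2: "kron (1\<^sub>m n) B * kron (1\<^sub>m n) A * kron (1\<^sub>m n) B = kron (1\<^sub>m n) B"
    by (simp only: kron_mult[OF B A p] kron_mult[OF BA B q] MP_parts(3)[OF MP])
  have 3: "transpose_mat (kron (1\<^sub>m n) A * kron (1\<^sub>m n) B) = kron (1\<^sub>m n) A * kron (1\<^sub>m n) B"
    by (simp only: kron_mult[OF A B q] kron_transpose[OF AB] MP_parts(4)[OF MP])
  have 4: "transpose_mat (kron (1\<^sub>m n) B * kron (1\<^sub>m n) A) = kron (1\<^sub>m n) B * kron (1\<^sub>m n) A"
    by (simp only: kron_mult[OF B A p] kron_transpose[OF BA] MP_parts(5)[OF MP])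
  show ?thesis unfolding is_MP_inverse_def using c 1 2 3 4 by blast
qed



lemma smult_smult_mat': "a \<cdot>\<^sub>m (b \<cdot>\<^sub>m (A::real mat)) = (a*b) \<cdot>\<^sub>m A"
  by (rule eq_matI) auto

lemma one_smult_mat'[simp]: "(1::real) \<cdot>\<^sub>m A = A"
  by (rule eq_matI) auto

lemma minus_zero_mat'[simp]: "(A::real mat) \<in> carrier_mat nr nc \<Longrightarrow> A - 0\<^sub>m nr nc = A"
  by (rule eq_matI) auto

lemma assoc_sq: assumes "dim_col A = dim_row B" "dim_col B = dim_row C"
  shows "A * B * C = A * (B * (C::real mat))"
proof -
  have "A \<in> carrier_mat (dim_row A) (dim_col A)" "B \<in> carrier_mat (dim_col A) (dim_col B)"
    "C \<in> carrier_mat (dim_col B) (dim_col C)" using assms by (auto intro!: carrier_matI)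
  then show ?thesis by (rule assoc_mult_mat)
qed

lemma block:
  fixes S Si J :: "real mat" and c :: real
  assumes S: "S \<in> carrier_mat m m" and Si: "Si \<in> carrier_mat m m"
    and SSi: "S * Si = 1\<^sub>m m" and SiS: "Si * S = 1\<^sub>m m" and Sit: "transpose_mat Si = Si"
    and J: "J \<in> carrier_mat m m" and JJ: "J * J = real m \<cdot>\<^sub>m J" and JSiJ: "J * Si * J = c \<cdot>\<^sub>m J"
    and Jt: "transpose_mat J = J" and c: "c \<noteq> 0" and m: "m > 0"
  defines "Mm \<equiv> 1\<^sub>m m - (1/real m) \<cdot>\<^sub>m J" and "p \<equiv> Si - (1/c) \<cdot>\<^sub>m (Si * J * Si)"
  shows "Mm * p = p" "p * Mm = p" "is_MP_inverse (Mm * S * Mm) p"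
proof -
  have JSi: "J * Si \<in> carrier_mat m m" "Si * J \<in> carrier_mat m m" using J Si by (auto intro: mult_carrier_mat)
  have SiJSi: "Si * J * Si \<in> carrier_mat m m" using J Si by (auto intro: mult_carrier_mat)
  have Mm: "Mm \<in> carrier_mat m m" unfolding Mm_def by (rule minus_carrier_mat) (use J in simp)
  have p: "p \<in> carrier_mat m m" unfolding p_def by (rule minus_carrier_mat) (use SiJSi in simp)
  note dims = carrier_matD[OF S] carrier_matD[OF Si] carrier_matD[OF J] carrier_matD[OF Mm] carrier_matD[OF p]
  have pJ: "p * J = 0\<^sub>m m m"
  proof -
    have "p * J = Si * J - ((1/c) \<cdot>\<^sub>m (Si * J * Si)) * J"
      unfolding p_def by (rule minus_mult_distrib_mat[OF Si _ J], use SiJSi in auto)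
    also have "((1/c) \<cdot>\<^sub>m (Si * J * Si)) * J = (1/c) \<cdot>\<^sub>m (Si * J * Si * J)"
      by (rule mult_smult_assoc_mat[OF SiJSi J])
    also have "Si * J * Si * J = Si * (J * Si * J)" by (simp add: assoc_sq dims)
    also have "\<dots> = c \<cdot>\<^sub>m (Si * J)" unfolding JSiJ by (rule mult_smult_distrib[OF Si J])
    also have "(1/c) \<cdot>\<^sub>m (c \<cdot>\<^sub>m (Si * J)) = Si * J" using c by (simp add: smult_smult_mat')
    finally show ?thesis using JSi by simp
  qed
  have Jp: "J * p = 0\<^sub>m m m"
  proof -
    have "J * p = J * Si - J * ((1/c) \<cdot>\<^sub>m (Si * J * Si))"
      unfolding p_def by (rule mult_minus_distrib_mat[OF J Si], use SiJSi in auto)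
    also have "J * ((1/c) \<cdot>\<^sub>m (Si * J * Si)) = (1/c) \<cdot>\<^sub>m (J * (Si * J * Si))"
      by (rule mult_smult_distrib[OF J SiJSi])
    also have "J * (Si * J * Si) = (J * Si * J) * Si" by (simp add: assoc_sq dims)
    also have "\<dots> = c \<cdot>\<^sub>m (J * Si)" unfolding JSiJ by (rule mult_smult_assoc_mat[OF J Si])
    also have "(1/c) \<cdot>\<^sub>m (c \<cdot>\<^sub>m (J * Si)) = J * Si" using c by (simp add: smult_smult_mat')
    finally show ?thesis using JSi by simp
  qed
  have one: "1\<^sub>m m \<in> carrier_mat m m" by simp
  have sJ: "\<And>a. a \<cdot>\<^sub>m J \<in> carrier_mat m m" using J by simp
  have Mmp: "Mm * p = p"
  proof -
    have "Mm * p = 1\<^sub>m m * p - ((1/real m) \<cdot>\<^sub>m J) * p"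
      unfolding Mm_def by (rule minus_mult_distrib_mat[OF one sJ p])
    also have "\<dots> = p - (1/real m) \<cdot>\<^sub>m (J * p)" using mult_smult_assoc_mat[OF J p] p by simp
    finally show ?thesis using p by (simp add: Jp)
  qed
  have pMm: "p * Mm = p"
  proof -
    have "p * Mm = p * 1\<^sub>m m - p * ((1/real m) \<cdot>\<^sub>m J)"
      unfolding Mm_def by (rule mult_minus_distrib_mat[OF p one sJ])
    also have "\<dots> = p - (1/real m) \<cdot>\<^sub>m (p * J)" using mult_smult_distrib[OF p J] p by simp
    finally show ?thesis using p by (simp add: pJ)
  qed
  have MmJ: "Mm * J = 0\<^sub>m m m"
  proof -
    have "Mm * J = 1\<^sub>m m * J - ((1/real m) \<cdot>\<^sub>m J) * J"
      unfolding Mm_def by (rule minus_mult_distrib_mat[OF one sJ J])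
    also have "\<dots> = J - (1/real m) \<cdot>\<^sub>m (J * J)" using mult_smult_assoc_mat[OF J J] J by simp
    also have "\<dots> = J - J" using m by (simp add: JJ smult_smult_mat')
    finally show ?thesis using J by simp
  qed
  have JMm: "J * Mm = 0\<^sub>m m m"
  proof -
    have "J * Mm = J * 1\<^sub>m m - J * ((1/real m) \<cdot>\<^sub>m J)"
      unfolding Mm_def by (rule mult_minus_distrib_mat[OF J one sJ])
    also have "\<dots> = J - (1/real m) \<cdot>\<^sub>m (J * J)" using mult_smult_distrib[OF J J] J by simp
    also have "\<dots> = J - J" using m by (simp add: JJ smult_smult_mat')
    finally show ?thesis using J by simp
  qed
  have MmMm: "Mm * Mm = Mm"
  proof -
    have "Mm * Mm = Mm * 1\<^sub>m m - Mm * ((1/real m) \<cdot>\<^sub>m J)"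
      by (subst (2) Mm_def, rule mult_minus_distrib_mat[OF Mm one sJ])
    also have "\<dots> = Mm - (1/real m) \<cdot>\<^sub>m (Mm * J)" using mult_smult_distrib[OF Mm J] Mm by simp
    finally show ?thesis using Mm by (simp add: MmJ)
  qed
  have Sp: "S * p = 1\<^sub>m m - (1/c) \<cdot>\<^sub>m (J * Si)"
  proof -
    have "S * p = S * Si - S * ((1/c) \<cdot>\<^sub>m (Si * J * Si))"
      unfolding p_def by (rule mult_minus_distrib_mat[OF S Si], use SiJSi in simp)
    also have "S * ((1/c) \<cdot>\<^sub>m (Si * J * Si)) = (1/c) \<cdot>\<^sub>m (S * (Si * J * Si))"
      by (rule mult_smult_distrib[OF S SiJSi])
    also have "S * (Si * J * Si) = (S * Si) * J * Si" by (simp add: assoc_sq dims)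
    finally show ?thesis using SSi J Si by simp
  qed
  have pS: "p * S = 1\<^sub>m m - (1/c) \<cdot>\<^sub>m (Si * J)"
  proof -
    have "p * S = Si * S - ((1/c) \<cdot>\<^sub>m (Si * J * Si)) * S"
      unfolding p_def by (rule minus_mult_distrib_mat[OF Si _ S], use SiJSi in simp)
    also have "((1/c) \<cdot>\<^sub>m (Si * J * Si)) * S = (1/c) \<cdot>\<^sub>m ((Si * J * Si) * S)"
      by (rule mult_smult_assoc_mat[OF SiJSi S])
    also have "(Si * J * Si) * S = Si * J * (Si * S)" by (simp add: assoc_sq dims)
    finally show ?thesis using SiS J Si by simp
  qed
  define A where "A = Mm * S * Mm"
  have A: "A \<in> carrier_mat m m" unfolding A_def using Mm S by (auto intro: mult_carrier_mat)
  have Ap: "A * p = Mm"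
  proof -
    have "A * p = Mm * (S * (Mm * p))" unfolding A_def by (simp add: assoc_sq dims)
    also have "\<dots> = Mm * (1\<^sub>m m - (1/c) \<cdot>\<^sub>m (J * Si))" by (simp add: Mmp Sp)
    also have "\<dots> = Mm * 1\<^sub>m m - Mm * ((1/c) \<cdot>\<^sub>m (J * Si))"
      by (rule mult_minus_distrib_mat[OF Mm one], use JSi in simp)
    also have "Mm * ((1/c) \<cdot>\<^sub>m (J * Si)) = (1/c) \<cdot>\<^sub>m (Mm * (J * Si))"
      by (rule mult_smult_distrib[OF Mm JSi(1)])
    also have "Mm * (J * Si) = (Mm * J) * Si" by (simp add: assoc_sq dims)
    finally show ?thesis using Mm Si by (simp add: MmJ)
  qed
  have pA: "p * A = Mm"
  proof -
    have "p * A = ((p * Mm) * S) * Mm" unfolding A_def by (simp add: assoc_sq dims)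
    also have "\<dots> = (1\<^sub>m m - (1/c) \<cdot>\<^sub>m (Si * J)) * Mm" by (simp add: pMm pS)
    also have "\<dots> = 1\<^sub>m m * Mm - ((1/c) \<cdot>\<^sub>m (Si * J)) * Mm"
      by (rule minus_mult_distrib_mat[OF one _ Mm], use JSi in simp)
    also have "((1/c) \<cdot>\<^sub>m (Si * J)) * Mm = (1/c) \<cdot>\<^sub>m ((Si * J) * Mm)"
      by (rule mult_smult_assoc_mat[OF JSi(2) Mm])
    also have "(Si * J) * Mm = Si * (J * Mm)" by (simp add: assoc_sq dims)
    finally show ?thesis using Mm Si by (simp add: JMm)
  qed
  have ApA: "A * p * A = A"
  proof -
    have "A * p * A = Mm * Mm * S * Mm" unfolding Ap unfolding A_def by (simp add: assoc_sq dims)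
    then show ?thesis by (simp add: MmMm A_def)
  qed
  have pAp: "p * A * p = p" by (simp add: pA Mmp)
  have Mmt: "transpose_mat Mm = Mm"
  proof (rule eq_matI)
    fix i j assume ij: "i < dim_row Mm" "j < dim_col Mm"
    have "J $$ (j, i) = J $$ (i, j)"
      using arg_cong[OF Jt, of "\<lambda>X. X $$ (i,j)"] ij J by (simp add: dims)
    then show "transpose_mat Mm $$ (i, j) = Mm $$ (i, j)" using ij J unfolding Mm_def
      by (simp add: dims) 
  qed (simp_all add: dims)
  show "Mm * p = p" by (rule Mmp)
  show "p * Mm = p" by (rule pMm)
  show "is_MP_inverse (Mm * S * Mm) p"
    unfolding A_def[symmetric] is_MP_inverse_def
    using ApA pAp Ap pA Mmt p A by (simp add: dims)
qed



lemma sym_pos_inv: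
  assumes Sig: "sym_pos_def m S"
  obtains Si where "Si \<in> carrier_mat m m" "S * Si = 1\<^sub>m m" "Si * S = 1\<^sub>m m"
proof -
  have S: "S \<in> carrier_mat m m" and pos: "\<And>x. x \<in> carrier_vec m \<Longrightarrow> x \<noteq> 0\<^sub>v m \<Longrightarrow> x \<bullet> (S *\<^sub>v x) > 0"
    using Sig unfolding sym_pos_def_def by auto
  have d: "det S \<noteq> 0"
  proof
    assume "det S = 0"
    then obtain v where v: "v \<in> carrier_vec m" "v \<noteq> 0\<^sub>v m" "S *\<^sub>v v = 0\<^sub>v m"
      using det_0_iff_vec_prod_zero_field[OF S] by blast
    have "v \<bullet> (S *\<^sub>v v) > 0" using pos v by blast
    then show False using v by simp
  qed
  have "S \<in> Units (ring_mat TYPE(real) m ())" by (rule det_non_zero_imp_unit[OF S d])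
  then obtain Si where "Si \<in> carrier_mat m m" "Si * S = 1\<^sub>m m" "S * Si = 1\<^sub>m m"
    unfolding Units_def by (auto simp: ring_mat_simps)
  then show ?thesis using that by blast
qed

lemma ones_J: "ones_col m * transpose_mat (ones_col m) = (mat m m (\<lambda>_. 1) :: real mat)"
  by (rule eq_matI) (auto simp: ones_col_def scalar_prod_def)

lemma ones_carrier: "(ones_col m :: real mat) \<in> carrier_mat m 1"
  by (simp add: ones_col_def)

lemma JJ: "(mat m m (\<lambda>_. 1) :: real mat) * mat m m (\<lambda>_. 1) = real m \<cdot>\<^sub>m mat m m (\<lambda>_. 1)"
  by (rule eq_matI) (auto simp: scalar_prod_def)

lemma JSiJ: assumes Si: "(Si :: real mat) \<in> carrier_mat m m"
  shows "mat m m (\<lambda>_. 1) * Si * mat m m (\<lambda>_. 1) = (\<Sum>k\<in>{0..<m}. \<Sum>l\<in>{0..<m}. Si $$ (l,k)) \<cdot>\<^sub>m mat m m (\<lambda>_. 1)"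
  using Si by (intro eq_matI) (auto simp: scalar_prod_def)

lemma eSie: assumes Si: "(Si :: real mat) \<in> carrier_mat m m"
  shows "transpose_mat (ones_col m) * Si * ones_col m = (\<Sum>k\<in>{0..<m}. \<Sum>l\<in>{0..<m}. Si $$ (l,k)) \<cdot>\<^sub>m 1\<^sub>m 1"
  using Si by (intro eq_matI) (auto simp: scalar_prod_def ones_col_def)

lemma eke: "ones_col m * (a \<cdot>\<^sub>m 1\<^sub>m 1) * transpose_mat (ones_col m) = a \<cdot>\<^sub>m (mat m m (\<lambda>_. 1) :: real mat)"
  by (rule eq_matI) (auto simp: scalar_prod_def ones_col_def)

lemma c_pos: assumes Sig: "sym_pos_def m S" and Si: "Si \<in> carrier_mat m m" and SSi: "S * Si = 1\<^sub>m m"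
  and m: "0 < m"
  shows "(\<Sum>k\<in>{0..<m}. \<Sum>l\<in>{0..<m}. Si $$ (l,k)) > 0"
proof -
  have S: "S \<in> carrier_mat m m" and pos: "\<And>x. x \<in> carrier_vec m \<Longrightarrow> x \<noteq> 0\<^sub>v m \<Longrightarrow> x \<bullet> (S *\<^sub>v x) > 0"
    using Sig unfolding sym_pos_def_def by auto
  define w where "w = vec m (\<lambda>_. 1::real)"
  have w: "w \<in> carrier_vec m" by (simp add: w_def)
  define v where "v = Si *\<^sub>v w"
  have v: "v \<in> carrier_vec m" unfolding v_def by (rule mult_mat_vec_carrier[OF Si w])
  have Sv: "S *\<^sub>v v = w" unfolding v_def using assoc_mult_mat_vec[OF S Si w] SSi w by simp
  have "v \<noteq> 0\<^sub>v m"
  proof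
    assume "v = 0\<^sub>v m"
    then have "w = S *\<^sub>v 0\<^sub>v m" using Sv by simp
    also have "\<dots> = 0\<^sub>v m" by (rule eq_vecI) (use S in \<open>auto simp: scalar_prod_def\<close>)
    finally have "w = 0\<^sub>v m" .
    then have "w $ 0 = 0\<^sub>v m $ 0" by simp
    then show False using m by (simp add: w_def)
  qed
  then have "v \<bullet> w > 0" using pos[OF v] Sv by simp
  also have "v \<bullet> w = (\<Sum>l\<in>{0..<m}. \<Sum>k\<in>{0..<m}. Si $$ (l,k))"
    using Si by (simp add: v_def w_def scalar_prod_def)
  also have "\<dots> = (\<Sum>k\<in>{0..<m}. \<Sum>l\<in>{0..<m}. Si $$ (l,k))" by (rule sum.swap)
  finally show ?thesis .
qed



theorem theorem5:
  fixes n m K :: nat and X Sigma :: "real mat" and y :: "real vec"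
  assumes "n \<ge> 2" and "m \<ge> 2" and "K \<ge> 1"
    and X: "X \<in> carrier_mat (m * n) K"
    and Sig: "sym_pos_def m Sigma"
    and y: "y \<in> carrier_vec (m * n)"
  defines "Z \<equiv> kron (1\<^sub>m n) (ones_col m)"
    and "W \<equiv> kron (1\<^sub>m n) (mat_inv Sigma)"
    and "Mm \<equiv> 1\<^sub>m m - (1 / real m) \<cdot>\<^sub>m (ones_col m * transpose_mat (ones_col m))"
  defines "Q \<equiv> Z * mat_inv (transpose_mat Z * W * Z) * transpose_mat Z * W"
    and "M \<equiv> kron (1\<^sub>m n) Mm"
    and "Dplus \<equiv> MP_inverse (kron (1\<^sub>m n) (Mm * Sigma * Mm))"
  defines "P \<equiv> W * (1\<^sub>m (m * n) - Q)"
    and "Cplus \<equiv> transpose_mat X * M * Dplus * M * X"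
  assumes "invertible_mat (transpose_mat X * P * X)"
    and "invertible_mat Cplus"
  shows "mat_inv Cplus *\<^sub>v ((transpose_mat X * M * Dplus) *\<^sub>v y)
       = mat_inv (transpose_mat X * P * X) *\<^sub>v ((transpose_mat X * P) *\<^sub>v y)"
proof -
  have m0: "0 < m" using assms(2) by simp
  have S: "Sigma \<in> carrier_mat m m" and St: "transpose_mat Sigma = Sigma"
    using Sig unfolding sym_pos_def_def by auto
  obtain Si where Si: "Si \<in> carrier_mat m m" and SSi: "Sigma * Si = 1\<^sub>m m" and SiS: "Si * Sigma = 1\<^sub>m m"
    using sym_pos_inv[OF Sig] by blast
  have invS: "mat_inv Sigma = Si" by (rule mat_inv_eq[OF S Si SSi SiS])
  have Sit': "transpose_mat Si \<in> carrier_mat m m" using Si by simp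
  have "mat_inv Sigma = transpose_mat Si"
  proof (rule mat_inv_eq[OF S Sit'])
    have "transpose_mat (Si * Sigma) = transpose_mat Sigma * transpose_mat Si" by (rule transpose_mult[OF Si S])
    then show "Sigma * transpose_mat Si = 1\<^sub>m m" using SiS St by simp
    have "transpose_mat (Sigma * Si) = transpose_mat Si * transpose_mat Sigma" by (rule transpose_mult[OF S Si])
    then show "transpose_mat Si * Sigma = 1\<^sub>m m" using SSi St by simp
  qed
  then have Sit: "transpose_mat Si = Si" using invS by simp
  define e :: "real mat" where "e = ones_col m"
  have e: "e \<in> carrier_mat m 1" unfolding e_def by (rule ones_carrier)
  have et: "transpose_mat e \<in> carrier_mat 1 m" using e by simp
  define J :: "real mat" where "J = e * transpose_mat e"
  have J_eq: "J = mat m m (\<lambda>_. 1)" unfolding J_def e_def by (rule ones_J)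
  have Jc: "J \<in> carrier_mat m m" by (simp add: J_eq)
  define c where "c = (\<Sum>k\<in>{0..<m}. \<Sum>l\<in>{0..<m}. Si $$ (l,k))"
  have c0: "c > 0" unfolding c_def by (rule c_pos[OF Sig Si SSi m0])
  have JJ': "J * J = real m \<cdot>\<^sub>m J" unfolding J_eq by (rule JJ)
  have JSiJ': "J * Si * J = c \<cdot>\<^sub>m J" unfolding J_eq c_def by (rule JSiJ[OF Si])
  have Jt: "transpose_mat J = J" unfolding J_eq by (rule eq_matI) auto
  define p where "p = Si - (1/c) \<cdot>\<^sub>m (Si * J * Si)"
  have blk: "Mm * p = p" "p * Mm = p" "is_MP_inverse (Mm * Sigma * Mm) p"
    using block[OF S Si SSi SiS Sit Jc JJ' JSiJ' Jt _ m0] c0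
    unfolding Mm_def p_def J_def e_def by auto
  define d where "d = 1 / c"
  have o1: "(1::nat) > 0" by simp
  have c1: "c \<cdot>\<^sub>m 1\<^sub>m 1 \<in> carrier_mat 1 1" "d \<cdot>\<^sub>m 1\<^sub>m 1 \<in> carrier_mat 1 1" by auto
  have etSi: "transpose_mat e * Si \<in> carrier_mat 1 m" using et Si by (rule mult_carrier_mat)
  have Zt: "transpose_mat Z = kron (1\<^sub>m n) (transpose_mat e)"
    unfolding Z_def e_def by (rule kron_transpose[OF ones_carrier])
  have ZWZ: "transpose_mat Z * W * Z = kron (1\<^sub>m n) (c \<cdot>\<^sub>m 1\<^sub>m 1)"
  proof -
    have "transpose_mat Z * W * Z = kron (1\<^sub>m n) (transpose_mat e * Si * e)"
      unfolding Zt unfolding W_def invS Z_def e_def[symmetric]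
      by (simp only: kron_mult[OF et Si m0] kron_mult[OF etSi e m0])
    also have "transpose_mat e * Si * e = c \<cdot>\<^sub>m 1\<^sub>m 1" unfolding e_def c_def by (rule eSie[OF Si])
    finally show ?thesis .
  qed
  have ZWZinv: "mat_inv (transpose_mat Z * W * Z) = kron (1\<^sub>m n) (d \<cdot>\<^sub>m 1\<^sub>m 1)"
  proof -
    have k1: "kron (1\<^sub>m n) (c \<cdot>\<^sub>m 1\<^sub>m 1) \<in> carrier_mat (n*1) (n*1)" by (rule kron_carrier[OF c1(1)])
    have k2: "kron (1\<^sub>m n) (d \<cdot>\<^sub>m 1\<^sub>m 1) \<in> carrier_mat (n*1) (n*1)" by (rule kron_carrier[OF c1(2)])
    have p1: "(c \<cdot>\<^sub>m 1\<^sub>m 1) * (d \<cdot>\<^sub>m 1\<^sub>m 1) = (1\<^sub>m 1 :: real mat)"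
      using c0 by (intro eq_matI) (auto simp: d_def scalar_prod_def)
    have p2: "(d \<cdot>\<^sub>m 1\<^sub>m 1) * (c \<cdot>\<^sub>m 1\<^sub>m 1) = (1\<^sub>m 1 :: real mat)"
      using c0 by (intro eq_matI) (auto simp: d_def scalar_prod_def)
    show ?thesis unfolding ZWZ
      by (rule mat_inv_eq[OF k1 k2], simp_all only: kron_mult[OF c1(1) c1(2) o1] kron_mult[OF c1(2) c1(1) o1] p1 p2 kron_one)
  qed
  have edet: "e * (d \<cdot>\<^sub>m 1\<^sub>m 1) \<in> carrier_mat m 1" using e c1(2) by (rule mult_carrier_mat)
  have edet2: "e * (d \<cdot>\<^sub>m 1\<^sub>m 1) * transpose_mat e \<in> carrier_mat m m" using edet et by (rule mult_carrier_mat)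
  have Q: "Q = kron (1\<^sub>m n) ((d \<cdot>\<^sub>m J) * Si)"
  proof -
    have "Q = kron (1\<^sub>m n) (e * (d \<cdot>\<^sub>m 1\<^sub>m 1) * transpose_mat e * Si)"
      unfolding Q_def unfolding ZWZinv unfolding Zt unfolding W_def invS Z_def e_def[symmetric]
      by (simp only: kron_mult[OF e c1(2) o1] kron_mult[OF edet et o1] kron_mult[OF edet2 Si m0])
    also have "e * (d \<cdot>\<^sub>m 1\<^sub>m 1) * transpose_mat e = d \<cdot>\<^sub>m J"
      unfolding e_def J_eq by (rule eke)
    finally show ?thesis .
  qed
  have dJSi: "(d \<cdot>\<^sub>m J) * Si \<in> carrier_mat m m" using Jc Si by auto
  have one_eq: "1\<^sub>m (m*n) = kron (1\<^sub>m n) (1\<^sub>m m :: real mat)" using kron_one[of n m] by (simp add: mult.commute)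
  have oneQ: "1\<^sub>m (m*n) - Q = kron (1\<^sub>m n) (1\<^sub>m m - (d \<cdot>\<^sub>m J) * Si)"
    unfolding one_eq Q by (rule kron_minus[OF one_carrier_mat dJSi])
  have onec: "1\<^sub>m m - (d \<cdot>\<^sub>m J) * Si \<in> carrier_mat m m" using dJSi by (auto intro: minus_carrier_mat)
  have pe: "Si * (1\<^sub>m m - (d \<cdot>\<^sub>m J) * Si) = p"
  proof -
    have "Si * (1\<^sub>m m - (d \<cdot>\<^sub>m J) * Si) = Si * 1\<^sub>m m - Si * ((d \<cdot>\<^sub>m J) * Si)"
      by (rule mult_minus_distrib_mat[OF Si one_carrier_mat dJSi])
    also have "\<dots> = Si - d \<cdot>\<^sub>m (Si * J * Si)"
    proof -
      have h1: "(d \<cdot>\<^sub>m J) * Si = d \<cdot>\<^sub>m (J * Si)" by (rule mult_smult_assoc_mat[OF Jc Si])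
      have h2: "Si * (d \<cdot>\<^sub>m (J * Si)) = d \<cdot>\<^sub>m (Si * (J * Si))"
        by (rule mult_smult_distrib[OF Si]) (use Jc Si in auto)
      have h3: "Si * (J * Si) = Si * J * Si" using assoc_mult_mat[OF Si Jc Si] by simp
      show ?thesis using Si by (simp only: h1 h2 h3 right_mult_one_mat[OF Si])
    qed
    finally show ?thesis using Si unfolding p_def d_def by simp
  qed
  have Pk: "P = kron (1\<^sub>m n) p"
    unfolding P_def oneQ unfolding W_def invS by (simp only: kron_mult[OF Si onec m0] pe)
  have Mmc: "Mm \<in> carrier_mat m m" unfolding Mm_def e_def[symmetric] J_def[symmetric] by (rule minus_carrier_mat) (use Jc in simp)
  have pc: "p \<in> carrier_mat m m" unfolding p_def by (rule minus_carrier_mat) (use Si Jc in auto)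
  have Ac: "Mm * Sigma * Mm \<in> carrier_mat m m" using Mmc S by auto
  have Dk: "Dplus = kron (1\<^sub>m n) p"
    unfolding Dplus_def by (rule MP_eq[OF kron_MP[OF Ac m0 m0 blk(3)]])
  have DP: "Dplus = P" using Dk Pk by simp
  have MP: "M * P = P" unfolding M_def Pk by (simp only: kron_mult[OF Mmc pc m0] blk(1))
  have PM: "P * M = P" unfolding M_def Pk by (simp only: kron_mult[OF pc Mmc m0] blk(2))
  have Pc: "P \<in> carrier_mat (m*n) (m*n)" unfolding Pk using kron_carrier[OF pc, of n] by (simp add: mult.commute)
  have Mc: "M \<in> carrier_mat (m*n) (m*n)" unfolding M_def using kron_carrier[OF Mmc, of n] by (simp add: mult.commute)
  have Xt: "transpose_mat X \<in> carrier_mat K (m*n)" using X by simp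
  have 1: "transpose_mat X * M * Dplus = transpose_mat X * P"
    unfolding DP using assoc_mult_mat[OF Xt Mc Pc] MP by simp
  have 2: "Cplus = transpose_mat X * P * X"
  proof -
    have "Cplus = transpose_mat X * P * M * X" unfolding Cplus_def 1 ..
    also have "\<dots> = transpose_mat X * (P * M) * X" using assoc_mult_mat[OF Xt Pc Mc] by simp
    finally show ?thesis using PM by simp
  qed
  show ?thesis unfolding 1 2 ..
qed


end
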